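(* Consider the surface-mounted permanent magnet synchronous machine (SPMSM) model with state $x=(i_\alpha,i_\beta,\omega,\theta)^T$, input $\mathcal{V}=(v_\alpha,v_\beta)^T$ and output $y=h(x)=(i_\alpha,i_\beta)^T$: \[ \frac{d}{dt}\begin{bmatrix}i_\alpha\\ i_\beta\end{bmatrix}=\frac{1}{L_0}\Big(\mathcal{V}-R\begin{bmatrix}i_\alpha\\ i_\beta\end{bmatrix}-\psi_r\,\omega\begin{bmatrix}-\sin\theta\\ \cos\theta\end{bmatrix}\Big),\quad \frac{d\omega}{dt}=\frac{p}{J}(T_m-T_l),\quad \frac{d\theta}{dt}=\omega, \] with $T_m=\frac{3p}{2}\psi_r(i_\beta\cos\theta-i_\alpha\sin\theta)$. Let $i_d=i_\alpha\cos\theta+i_\beta\sin\theta$. Then: (i) the determinant of the $4\times4$ matrix $\frac{\partial}{\partial x}\begin{bmatrix}h\\ \mathcal{L}_fh\end{bmatrix}$ equals $\Delta_{y1}=\omega\,(\psi_r/L_0)^2$, so the rank condition holds whenever $\omega\neq0$; (ii) the determinant of the $4\times4$ matrix $\frac{\partial}{\partial x}\begin{bmatrix}h\\ \mathcal{L}_f^2h\end{bmatrix}$ equals \[ \Delta_{y2}=\frac{\psi_r^2}{L_0^2}\Big[\Big(2\omega^2+\frac{R^2}{L_0^2}+\frac{3p^2}{J}\psi_r i_d\Big)\omega-\frac{R}{L_0}\frac{d\omega}{dt}\Big]. \] In particular, at zero speed $\omega=0$ the SPMSM is locally weakly observable if the rotor acceleration $\frac{d\omega}{dt}$ is nonzero.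 *)

theory Defs
  imports "HOL-Analysis.Analysis"
begin

text \<open>State x = (i_alpha, i_beta, omega, theta) is a vector in real^4 with
  components x$1, x$2, x$3, x$4 respectively.\<close>

definition pderiv4 :: "(real^4 \<Rightarrow> real) \<Rightarrow> 4 \<Rightarrow> real^4 \<Rightarrow> real" where
  "pderiv4 \<phi> j x = deriv (\<lambda>t. \<phi> (x + t *\<^sub>R axis j 1)) 0"

definition lie_deriv :: "(real^4 \<Rightarrow> real^4) \<Rightarrow> (real^4 \<Rightarrow> real) \<Rightarrow> real^4 \<Rightarrow> real" where
  "lie_deriv F \<phi> x = (\<Sum>j\<in>UNIV. pderiv4 \<phi> j x * F x $ j)"

definition jacobian4 :: "(real^4 \<Rightarrow> real^4) \<Rightarrow> real^4 \<Rightarrow> real^4^4" where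
  "jacobian4 G x = (\<chi> i j. pderiv4 (\<lambda>y. G y $ i) j x)"

definition spmsm_Tm :: "real \<Rightarrow> real \<Rightarrow> real^4 \<Rightarrow> real" where
  "spmsm_Tm p psi x = 3 * p / 2 * psi * (x$2 * cos (x$4) - x$1 * sin (x$4))"

text \<open>SPMSM vector field (input v = (va, vb) and load torque Tl held constant).\<close>
definition spmsm_f :: "real \<Rightarrow> real \<Rightarrow> real \<Rightarrow> real \<Rightarrow> real \<Rightarrow> real \<Rightarrow> real \<Rightarrow> real
    \<Rightarrow> real^4 \<Rightarrow> real^4" where
  "spmsm_f L0 R psi p J Tl va vb x =
     (\<chi> k. if k = 1 then (va - R * x$1 - psi * x$3 * (- sin (x$4))) / L0
           else if k = 2 then (vb - R * x$2 - psi * x$3 * cos (x$4)) / L0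
           else if k = 3 then p / J * (spmsm_Tm p psi x - Tl)
           else x$3)"

definition stack_obs :: "(real^4 \<Rightarrow> real^4) \<Rightarrow> nat \<Rightarrow> real^4 \<Rightarrow> real^4" where
  "stack_obs F k y = vector [y$1, y$2, ((lie_deriv F ^^ k) (\<lambda>z. z$1)) y,
                                      ((lie_deriv F ^^ k) (\<lambda>z. z$2)) y]"

end

theory Submission
  imports Defs
begin

lemma line_comp: "(x + t *\<^sub>R axis j 1) $ k = x$k + (if k = j then t else 0)"
  by (simp add: axis_def)

lemma vector_4 [simp]:
 "(vector [a,b,c,d] ::('a::zero)^4)$1 = a"
 "(vector [a,b,c,d] ::('a::zero)^4)$2 = b"
 "(vector [a,b,c,d] ::('a::zero)^4)$3 = c"
 "(vector [a,b,c,d] ::('a::zero)^4)$4 = d"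
  unfolding vector_def by simp_all

lemma F1: "spmsm_f L0 R psi p J Tl va vb y $ 1 = (va - R * y$1 + psi * y$3 * sin (y$4)) / L0"
  by (simp add: spmsm_f_def)
lemma F2: "spmsm_f L0 R psi p J Tl va vb y $ 2 = (vb - R * y$2 - psi * y$3 * cos (y$4)) / L0"
  by (simp add: spmsm_f_def)
lemma F3: "spmsm_f L0 R psi p J Tl va vb y $ 3 = p / J * (3 * p / 2 * psi * (y$2 * cos (y$4) - y$1 * sin (y$4)) - Tl)"
  by (simp add: spmsm_f_def spmsm_Tm_def)
lemma F4: "spmsm_f L0 R psi p J Tl va vb y $ 4 = y$3"
  by (simp add: spmsm_f_def)

lemma pd_coord: "pderiv4 (\<lambda>y. y$k) j x = (if k = j then 1 else 0)"
  unfolding pderiv4_def line_comp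
  by (rule DERIV_imp_deriv) (auto intro!: derivative_eq_intros)

lemma pd_f1:
  assumes "L0 \<noteq> 0"
  shows "pderiv4 (\<lambda>y. spmsm_f L0 R psi p J Tl va vb y $ 1) j x =
  (if j = 1 then -R/L0 else if j = 3 then psi * sin (x$4)/L0 else if j = 4 then psi * x$3 * cos (x$4)/L0 else 0)"
  unfolding F1 pderiv4_def line_comp
  apply (insert exhaust_4[of j])
  apply (elim disjE; simp; rule DERIV_imp_deriv; (auto intro!: derivative_eq_intros simp: field_simps assms))
  done

lemma pd_f2:
  assumes "L0 \<noteq> 0"
  shows "pderiv4 (\<lambda>y. spmsm_f L0 R psi p J Tl va vb y $ 2) j x =
  (if j = 2 then -R/L0 else if j = 3 then - psi * cos (x$4)/L0 else if j = 4 then psi * x$3 * sin (x$4)/L0 else 0)"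
  unfolding F2 pderiv4_def line_comp
  apply (insert exhaust_4[of j])
  apply (elim disjE; simp; rule DERIV_imp_deriv; (auto intro!: derivative_eq_intros simp: field_simps assms))
  done

lemma lie_coord:
  "lie_deriv F (\<lambda>z. z$k) = (\<lambda>y. F y $ k)"
  unfolding lie_deriv_def pd_coord
  apply (rule ext)
  apply (insert exhaust_4[of k])
  apply (auto simp: sum_4)
  done

definition E1 where "E1 L0 R psi p J Tl va vb y =
  -R/L0 * ((va - R * y$1 + psi * y$3 * sin (y$4)) / L0)
  + psi * sin (y$4)/L0 * (p / J * (3 * p / 2 * psi * (y$2 * cos (y$4) - y$1 * sin (y$4)) - Tl))
  + psi * y$3 * cos (y$4)/L0 * y$3"

definition E2 where "E2 L0 R psi p J Tl va vb y =
  -R/L0 * ((vb - R * y$2 - psi * y$3 * cos (y$4)) / L0)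
  - psi * cos (y$4)/L0 * (p / J * (3 * p / 2 * psi * (y$2 * cos (y$4) - y$1 * sin (y$4)) - Tl))
  + psi * y$3 * sin (y$4)/L0 * y$3"

lemma lie_E1:
  assumes "L0 \<noteq> 0"
  shows "lie_deriv (spmsm_f L0 R psi p J Tl va vb) (\<lambda>y. spmsm_f L0 R psi p J Tl va vb y $ 1)
     = E1 L0 R psi p J Tl va vb"
  apply (rule ext)
  apply (simp only: lie_deriv_def sum_4 pd_f1[OF assms])
  apply (simp add: E1_def F1 F3 F4 field_simps assms)
  done

lemma lie_E2:
  assumes "L0 \<noteq> 0"
  shows "lie_deriv (spmsm_f L0 R psi p J Tl va vb) (\<lambda>y. spmsm_f L0 R psi p J Tl va vb y $ 2)
     = E2 L0 R psi p J Tl va vb"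
  apply (rule ext)
  apply (simp only: lie_deriv_def sum_4 pd_f2[OF assms])
  apply (simp add: E2_def F2 F3 F4 field_simps assms)
  done

lemma pd_E1_3:
  assumes "L0 \<noteq> 0" "J \<noteq> 0"
  shows "pderiv4 (E1 L0 R psi p J Tl va vb) 3 x =
     -R/L0 * (psi * sin (x$4) / L0) + 2 * psi * x$3 * cos (x$4) / L0"
  unfolding E1_def pderiv4_def line_comp
  by (simp, rule DERIV_imp_deriv, (auto intro!: derivative_eq_intros simp: field_simps assms))

lemma pd_E1_4:
  assumes "L0 \<noteq> 0" "J \<noteq> 0"
  shows "pderiv4 (E1 L0 R psi p J Tl va vb) 4 x =
     -R/L0 * (psi * x$3 * cos (x$4) / L0)
     + psi * cos (x$4)/L0 * (p / J * (3 * p / 2 * psi * (x$2 * cos (x$4) - x$1 * sin (x$4)) - Tl))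
     + psi * sin (x$4)/L0 * (p / J * (3 * p / 2 * psi * (- x$2 * sin (x$4) - x$1 * cos (x$4))))
     - psi * x$3 * x$3 * sin (x$4) / L0"
  unfolding E1_def pderiv4_def line_comp
  by (simp, rule DERIV_imp_deriv, (auto intro!: derivative_eq_intros simp: field_simps assms))

lemma pd_E2_3:
  assumes "L0 \<noteq> 0" "J \<noteq> 0"
  shows "pderiv4 (E2 L0 R psi p J Tl va vb) 3 x =
     R/L0 * (psi * cos (x$4) / L0) + 2 * psi * x$3 * sin (x$4) / L0"
  unfolding E2_def pderiv4_def line_comp
  by (simp, rule DERIV_imp_deriv, (auto intro!: derivative_eq_intros simp: field_simps assms))

lemma pd_E2_4:
  assumes "L0 \<noteq> 0" "J \<noteq> 0"
  shows "pderiv4 (E2 L0 R psi p J Tl va vb) 4 x =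
     -R/L0 * (psi * x$3 * sin (x$4) / L0)
     + psi * sin (x$4)/L0 * (p / J * (3 * p / 2 * psi * (x$2 * cos (x$4) - x$1 * sin (x$4)) - Tl))
     - psi * cos (x$4)/L0 * (p / J * (3 * p / 2 * psi * (- x$2 * sin (x$4) - x$1 * cos (x$4))))
     + psi * x$3 * x$3 * cos (x$4) / L0"
  unfolding E2_def pderiv4_def line_comp
  by (simp, rule DERIV_imp_deriv, (auto intro!: derivative_eq_intros simp: field_simps assms))

lemma det_4_block:
  fixes A :: "'a::comm_ring_1^4^4"
  assumes "A$1$1 = 1" "A$1$2 = 0" "A$1$3 = 0" "A$1$4 = 0"
          "A$2$1 = 0" "A$2$2 = 1" "A$2$3 = 0" "A$2$4 = 0"
  shows "det A = A$3$3 * A$4$4 - A$3$4 * A$4$3"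
proof -
  have f1: "finite {2::4, 3, 4}" "1 \<notin> {2::4, 3, 4}" by auto
  have f2: "finite {3::4, 4}" "2 \<notin> {3::4, 4}" by auto
  have f3: "finite {4::4}" "3 \<notin> {4::4}" by auto
  show ?thesis
    unfolding det_def UNIV_4
    unfolding sum_over_permutations_insert[OF f1]
    unfolding sum_over_permutations_insert[OF f2]
    unfolding sum_over_permutations_insert[OF f3]
    unfolding permutes_sing
    by (simp add: assms sign_swap_id permutation_swap_id sign_compose sign_id swap_id_eq)
qed

lemma sc_sq: "sin t * sin t + cos t * cos t = (1::real)"
  by (metis sin_cos_squared_add power2_eq_square)

theorem mainTheorem2:
  fixes L0 R psi p J Tl va vb :: real and x :: "real^4"
  assumes "L0 > 0" and "R > 0" and "psi > 0" and "p > 0" and "J > 0"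
  defines "F \<equiv> spmsm_f L0 R psi p J Tl va vb"
  defines "i_d \<equiv> x$1 * cos (x$4) + x$2 * sin (x$4)"
  defines "domega \<equiv> F x $ 3"
  shows "det (jacobian4 (stack_obs F 1) x) = x$3 * (psi / L0)^2
       \<and> (x$3 \<noteq> 0 \<longrightarrow> det (jacobian4 (stack_obs F 1) x) \<noteq> 0)
       \<and> det (jacobian4 (stack_obs F 2) x) =
           psi^2 / L0^2 * ((2 * (x$3)^2 + R^2 / L0^2 + 3 * p^2 / J * psi * i_d) * x$3
                           - R / L0 * domega)
       \<and> (x$3 = 0 \<and> domega \<noteq> 0 \<longrightarrow> det (jacobian4 (stack_obs F 2) x) \<noteq> 0)"
proof -
  have L: "L0 \<noteq> 0" and J: "J \<noteq> 0" using assms by auto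
  have s1: "stack_obs F 1 = (\<lambda>y. vector [y$1, y$2, F y $ 1, F y $ 2])"
    by (rule ext) (simp add: stack_obs_def lie_coord)
  have s2: "stack_obs F 2 = (\<lambda>y. vector [y$1, y$2, E1 L0 R psi p J Tl va vb y, E2 L0 R psi p J Tl va vb y])"
    by (rule ext) (simp add: stack_obs_def lie_coord numeral_2_eq_2 F_def lie_E1[OF L] lie_E2[OF L])
  have d1: "det (jacobian4 (stack_obs F 1) x) = x$3 * (psi / L0)^2"
    unfolding s1
    apply (subst det_4_block)
    apply (simp_all add: jacobian4_def pd_coord)
    apply (simp add: F_def pd_f1[OF L] pd_f2[OF L])
    apply (rule trans[of _ "psi*psi*x$3*((sin (x$4))^2 + (cos (x$4))^2)/(L0*L0)"])
    unfolding power2_eq_square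
     apply (simp only: add_divide_distrib[symmetric]) 
     apply (simp only: algebra_simps)
    using sin_cos_squared_add[of "x$4"] by (simp add: power2_eq_square)
  have d2: "det (jacobian4 (stack_obs F 2) x) =
           psi^2 / L0^2 * ((2 * (x$3)^2 + R^2 / L0^2 + 3 * p^2 / J * psi * i_d) * x$3
                           - R / L0 * domega)"
    unfolding s2
    apply (subst det_4_block)
    apply (simp_all add: jacobian4_def pd_coord)
    apply (simp add: pd_E1_3[OF L J] pd_E1_4[OF L J] pd_E2_3[OF L J] pd_E2_4[OF L J] i_d_def domega_def F_def F3)
    apply (simp add: field_simps L J)
    using sc_sq[of "x$4"] by algebra
  show ?thesis
  proof (intro conjI impI)
    show "det (jacobian4 (stack_obs F 1) x) = x$3 * (psi / L0)^2" by (rule d1)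
    show "det (jacobian4 (stack_obs F 1) x) \<noteq> 0" if "x$3 \<noteq> 0"
      using that assms(1,3) unfolding d1 by simp
    show "det (jacobian4 (stack_obs F 2) x) =
           psi^2 / L0^2 * ((2 * (x$3)^2 + R^2 / L0^2 + 3 * p^2 / J * psi * i_d) * x$3
                           - R / L0 * domega)" by (rule d2)
    show "det (jacobian4 (stack_obs F 2) x) \<noteq> 0" if "x$3 = 0 \<and> domega \<noteq> 0"
      using that assms(1,2,3) unfolding d2 by simp
  qed
qed

end
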